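(* For the system $$(u_{0,0}-u_{1,1})(v_{1,0}-v_{0,1})-\alpha+\beta=0,\qquad (v_{0,0}-v_{1,1})(u_{1,0}-u_{0,1})-\alpha+\beta=0,$$ the pair $$(\rho,\sigma)=\big(\ln|(u_{1,0}-u_{-1,0})(v_{1,0}-v_{-1,0})|,\ \ \ln|(u_{0,1}-u_{-1,0})(v_{0,1}-v_{-1,0})|\big)$$ is a conservation law, i.e. $(\mathcal T-1)\rho=(\mathcal S-1)\sigma$ on solutions.
   Context: Unknowns $u,v$ on $\mathbb Z^2$, $u_{i,j}=u(n+i,m+j)$, similarly $v$; $\alpha\neq\beta$ constants. Shifts $\mathcal S:n\mapsto n+1$, $\mathcal T:m\mapsto m+1$, acting by $\mathcal S^k\mathcal T^\ell(f_{i,j})=f_{i+k,j+\ell}$. A conservation law is a pair $(\rho,\sigma)$ of functions of finitely many shifts of $(u,v)$ with $(\mathcal T-1)\rho=(\mathcal S-1)\sigma$ holding for all solutions of the system (on which all arguments of logarithms are nonzero). *)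

theory Defs
  imports Complex_Main
begin

text \<open>Fields on Z^2: f n m stands for f(n,m); f_{i,j} = f (n+i) (m+j).\<close>

definition is_solution :: "real \<Rightarrow> real \<Rightarrow> (int \<Rightarrow> int \<Rightarrow> real) \<Rightarrow> (int \<Rightarrow> int \<Rightarrow> real) \<Rightarrow> bool" where
  "is_solution \<alpha> \<beta> u v \<longleftrightarrow> (\<forall>n m.
     (u n m - u (n+1) (m+1)) * (v (n+1) m - v n (m+1)) - \<alpha> + \<beta> = 0 \<and>
     (v n m - v (n+1) (m+1)) * (u (n+1) m - u n (m+1)) - \<alpha> + \<beta> = 0)"

definition rho_arg :: "(int \<Rightarrow> int \<Rightarrow> real) \<Rightarrow> (int \<Rightarrow> int \<Rightarrow> real) \<Rightarrow> int \<Rightarrow> int \<Rightarrow> real" where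
  "rho_arg u v n m = (u (n+1) m - u (n-1) m) * (v (n+1) m - v (n-1) m)"

definition sigma_arg :: "(int \<Rightarrow> int \<Rightarrow> real) \<Rightarrow> (int \<Rightarrow> int \<Rightarrow> real) \<Rightarrow> int \<Rightarrow> int \<Rightarrow> real" where
  "sigma_arg u v n m = (u n (m+1) - u (n-1) m) * (v n (m+1) - v (n-1) m)"

definition rho :: "(int \<Rightarrow> int \<Rightarrow> real) \<Rightarrow> (int \<Rightarrow> int \<Rightarrow> real) \<Rightarrow> int \<Rightarrow> int \<Rightarrow> real" where
  "rho u v n m = ln \<bar>rho_arg u v n m\<bar>"

definition sigma :: "(int \<Rightarrow> int \<Rightarrow> real) \<Rightarrow> (int \<Rightarrow> int \<Rightarrow> real) \<Rightarrow> int \<Rightarrow> int \<Rightarrow> real" where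
  "sigma u v n m = ln \<bar>sigma_arg u v n m\<bar>"

end

theory Submission
  imports Defs
begin

lemma key:
  fixes u00 u11 u10 u01 um0 um1 v00 v11 v10 v01 vm0 vm1 c :: real
  assumes e1: "(u00 - u11) * (v10 - v01) = c"
    and e2: "(v00 - v11) * (u10 - u01) = c"
    and e3: "(um0 - u01) * (v00 - vm1) = c"
    and e4: "(vm0 - v01) * (u00 - um1) = c"
    and c: "c \<noteq> 0"
  shows "((u11 - um1) * (v11 - vm1)) * ((u01 - um0) * (v01 - vm0))
       = ((u11 - u00) * (v11 - v00)) * ((u10 - um0) * (v10 - vm0))"
proof -
  have A: "v10 - v01 \<noteq> 0" using e1 c by auto
  have B: "u10 - u01 \<noteq> 0" using e2 c by auto
  have h1: "(v10 - v01) * (vm0 - v01) * (u11 - um1) = c * (v10 - vm0)"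
  proof -
    have "(v10 - v01) * (vm0 - v01) * (u11 - um1)
        = - ((u00 - u11) * (v10 - v01)) * (vm0 - v01) + (v10 - v01) * ((vm0 - v01) * (u00 - um1))"
      by (simp add: algebra_simps)
    also have "\<dots> = c * (v10 - vm0)" using e1 e4 by (simp add: algebra_simps)
    finally show ?thesis .
  qed
  have h2: "(u10 - u01) * (um0 - u01) * (v11 - vm1) = c * (u10 - um0)"
  proof -
    have "(u10 - u01) * (um0 - u01) * (v11 - vm1)
        = - ((v00 - v11) * (u10 - u01)) * (um0 - u01) + (u10 - u01) * ((um0 - u01) * (v00 - vm1))"
      by (simp add: algebra_simps)
    also have "\<dots> = c * (u10 - um0)" using e2 e3 by (simp add: algebra_simps)
    finally show ?thesis .
  qed
  have "(v10 - v01) * (u10 - u01) * (((u11 - um1) * (v11 - vm1)) * ((u01 - um0) * (v01 - vm0)))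
      = ((v10 - v01) * (vm0 - v01) * (u11 - um1)) * ((u10 - u01) * (um0 - u01) * (v11 - vm1))"
    by (simp add: algebra_simps)
  also have "\<dots> = (c * (v10 - vm0)) * (c * (u10 - um0))" using h1 h2 by simp
  also have "\<dots> = ((u00 - u11) * (v10 - v01)) * ((v00 - v11) * (u10 - u01)) * ((u10 - um0) * (v10 - vm0))"
    using e1 e2 by (simp add: algebra_simps)
  also have "\<dots> = (v10 - v01) * (u10 - u01) * (((u11 - u00) * (v11 - v00)) * ((u10 - um0) * (v10 - vm0)))"
    by (simp add: algebra_simps)
  finally show ?thesis using A B by simp
qed

lemma lnabs: "(x::real) \<noteq> 0 \<Longrightarrow> y \<noteq> 0 \<Longrightarrow> ln \<bar>x * y\<bar> = ln \<bar>x\<bar> + ln \<bar>y\<bar>"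
proof -
  assume "x \<noteq> 0" "y \<noteq> 0"
  then have "\<bar>x\<bar> > 0" "\<bar>y\<bar> > 0" by auto
  then have "ln (\<bar>x\<bar> * \<bar>y\<bar>) = ln \<bar>x\<bar> + ln \<bar>y\<bar>" by (rule ln_mult_pos)
  then show ?thesis by (simp add: abs_mult)
qed

theorem mainTheorem5:
  fixes u v :: "int \<Rightarrow> int \<Rightarrow> real" and \<alpha> \<beta> :: real
  assumes "\<alpha> \<noteq> \<beta>"
    and "is_solution \<alpha> \<beta> u v"
    and "\<forall>n m. rho_arg u v n m \<noteq> 0"
    and "\<forall>n m. sigma_arg u v n m \<noteq> 0"
  shows "\<forall>n m. rho u v n (m+1) - rho u v n m = sigma u v (n+1) m - sigma u v n m"
proof (intro allI)
  fix n m
  let ?c = "\<alpha> - \<beta>"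
  have s: "\<And>n m. (u n m - u (n+1) (m+1)) * (v (n+1) m - v n (m+1)) = ?c"
          "\<And>n m. (v n m - v (n+1) (m+1)) * (u (n+1) m - u n (m+1)) = ?c"
    using assms(2) unfolding is_solution_def by (auto simp: algebra_simps)
  have e3: "(u (n-1) m - u n (m+1)) * (v n m - v (n-1) (m+1)) = ?c"
    using s(1)[of "n-1" m] by simp
  have e4: "(v (n-1) m - v n (m+1)) * (u n m - u (n-1) (m+1)) = ?c"
    using s(2)[of "n-1" m] by simp
  have K: "rho_arg u v n (m+1) * sigma_arg u v n m = sigma_arg u v (n+1) m * rho_arg u v n m"
    unfolding rho_arg_def sigma_arg_def
    using key[OF s(1)[of n m] s(2)[of n m] e3 e4] assms(1) by (simp add: algebra_simps)
  note p = lnabs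
  have "ln \<bar>rho_arg u v n (m+1)\<bar> + ln \<bar>sigma_arg u v n m\<bar>
      = ln \<bar>sigma_arg u v (n+1) m\<bar> + ln \<bar>rho_arg u v n m\<bar>"
    using p[of "rho_arg u v n (m+1)" "sigma_arg u v n m"]
          p[of "sigma_arg u v (n+1) m" "rho_arg u v n m"] K assms(3,4) by simp
  then show "rho u v n (m+1) - rho u v n m = sigma u v (n+1) m - sigma u v n m"
    unfolding rho_def sigma_def by linarith
qed

end
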